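(* Consider EPISODE (described in the context) applied to $f=\frac1N\sum_{i=1}^N f_i$, and suppose: each $f_i$ is twice differentiable with $\|\nabla^2 f_i(x)\|\le L_0+L_1\|\nabla f_i(x)\|$ for all $x$; for all $x$, $\mathbb{E}[\nabla F_i(x;\xi_i)]=\nabla f_i(x)$ and $\|\nabla F_i(x;\xi_i)-\nabla f_i(x)\|\le\sigma$ almost surely ($\xi_i\sim\mathcal{D}_i$); and $\|\nabla f_i(x)\|\le\kappa+\rho\|\nabla f(x)\|$ for all $x,i$, with $\kappa\ge0$, $\rho\ge1$. Fix $C\ge1$ and let $A=1+e^C-\frac{e^C-1}{C}$, $B=\frac{e^C-1}{C}$. Suppose $$2\eta I\big(AL_0+BL_1\kappa+BL_1\rho(\sigma+\gamma/\eta)\big)\le1\quad\text{and}\quad\max\Big\{2\eta I\big(2\sigma+\gamma/\eta\big),\ \gamma I\Big\}\le\frac{C}{L_1}.$$ Then for any round $r$, any $i\in[N]$ and any $t$ with $t-1\in\mathcal{I}_r$, $$\mathbb{E}_r\big[\mathbb{1}_{\mathcal{A}_r}\|x^i_t-\bar{x}_r\|^2\big]\le 36p_rI^2\eta^2\|\nabla f(\bar{x}_r)\|^2+126p_rI^2\eta^2\sigma^2,$$ $$\mathbb{E}_r\big[\mathbb{1}_{\mathcal{A}_r}\|x^i_t-\bar{x}_r\|^2\big]\le 18p_rI^2\eta\gamma\|\nabla f(\bar{x}_r)\|+18p_rI^2\eta^2\big(\gamma\sigma/\eta+5\sigma^2\big).$$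
   Context: Here $f_i(x)=\mathbb{E}_{\xi_i\sim\mathcal{D}_i}[F_i(x;\xi_i)]$ and $\|\cdot\|$ is the Euclidean norm. EPISODE with $N$ clients, communication interval $I\ge1$, step size $\eta>0$, clipping parameter $\gamma>0$: let $t_r=rI$ and $\mathcal{I}_r=\{t_r,\dots,t_{r+1}-1\}$; $\bar{x}_0=x_0$. At the start of round $r$, every client sets $x^i_{t_r}=\bar{x}_r$; each client draws a fresh $\tilde\xi^i_r\sim\mathcal{D}_i$, sets $G^i_r=\nabla F_i(\bar{x}_r;\tilde\xi^i_r)$, and $G_r=\frac1N\sum_i G^i_r$. The event $\mathcal{A}_r=\{\|G_r\|\le\gamma/\eta\}$. For $t\in\mathcal{I}_r$, client $i$ draws fresh $\xi^i_t\sim\mathcal{D}_i$, sets $g^i_t=\nabla F_i(x^i_t;\xi^i_t)-G^i_r+G_r$, and updates $x^i_{t+1}=x^i_t-\eta g^i_t$ on $\mathcal{A}_r$, and $x^i_{t+1}=x^i_t-\gamma g^i_t/\|g^i_t\|$ otherwise. Then $\bar{x}_{r+1}=\frac1N\sum_i x^i_{t_{r+1}}$. All samples are independent. $\mathcal{F}_r$ is the $\sigma$-algebra generated by all samples $\xi^i_t$ ($t\in\mathcal{I}_l$) and $\tilde\xi^i_l$ for rounds $l<r$ (so $\bar{x}_r$ is $\mathcal{F}_r$-measurable), $\mathbb{E}_r[\cdot]=\mathbb{E}[\cdot\mid\mathcal{F}_r]$, and $p_r=\mathbb{E}_r[\mathbb{1}_{\mathcal{A}_r}]=\mathbb{P}(\mathcal{A}_r\mid\mathcal{F}_r)$.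 *)

theory Defs
  imports "HOL-Probability.Probability"
begin

text \<open>One communication round of EPISODE, started from the (conditionally fixed)
  server point xbar.  Clients are 0..N-1; local step k = t - t_r.
  tx i = the sample tilde-xi^i_r, xs i k = the sample xi^i_{t_r+k}.\<close>

definition ep_Gi :: "('a::real_normed_vector \<Rightarrow> 'b \<Rightarrow> 'a) \<Rightarrow> 'a \<Rightarrow> ('m \<Rightarrow> 'b) \<Rightarrow> 'm \<Rightarrow> 'a" where
  "ep_Gi gFi xbar txi \<omega> = gFi xbar (txi \<omega>)"

definition ep_G :: "nat \<Rightarrow> (nat \<Rightarrow> 'a::real_normed_vector \<Rightarrow> 'b \<Rightarrow> 'a) \<Rightarrow> 'a \<Rightarrow> (nat \<Rightarrow> 'm \<Rightarrow> 'b) \<Rightarrow> 'm \<Rightarrow> 'a" where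
  "ep_G N gF xbar tx \<omega> = (1 / real N) *\<^sub>R (\<Sum>i<N. ep_Gi (gF i) xbar (tx i) \<omega>)"

definition ep_event :: "nat \<Rightarrow> real \<Rightarrow> real \<Rightarrow> (nat \<Rightarrow> 'a::real_normed_vector \<Rightarrow> 'b \<Rightarrow> 'a) \<Rightarrow> 'a \<Rightarrow> (nat \<Rightarrow> 'm \<Rightarrow> 'b) \<Rightarrow> 'm set" where
  "ep_event N \<eta> \<gamma> gF xbar tx = {\<omega>. norm (ep_G N gF xbar tx \<omega>) \<le> \<gamma> / \<eta>}"

primrec ep_x :: "nat \<Rightarrow> real \<Rightarrow> real \<Rightarrow> (nat \<Rightarrow> 'a::real_normed_vector \<Rightarrow> 'b \<Rightarrow> 'a) \<Rightarrow> 'a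
   \<Rightarrow> (nat \<Rightarrow> 'm \<Rightarrow> 'b) \<Rightarrow> (nat \<Rightarrow> nat \<Rightarrow> 'm \<Rightarrow> 'b) \<Rightarrow> nat \<Rightarrow> nat \<Rightarrow> 'm \<Rightarrow> 'a" where
  "ep_x N \<eta> \<gamma> gF xbar tx xs i 0 \<omega> = xbar"
| "ep_x N \<eta> \<gamma> gF xbar tx xs i (Suc k) \<omega> =
     (let x = ep_x N \<eta> \<gamma> gF xbar tx xs i k \<omega>;
          g = gF i x (xs i k \<omega>) - ep_Gi (gF i) xbar (tx i) \<omega> + ep_G N gF xbar tx \<omega>
      in if \<omega> \<in> ep_event N \<eta> \<gamma> gF xbar tx then x - \<eta> *\<^sub>R g
         else x - (\<gamma> / norm g) *\<^sub>R g)"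

end

theory Submission
  imports Defs
begin

lemma AB_ge: fixes C :: real assumes "C \<ge> 1"
  shows "(exp C - 1) / C \<le> 1 + exp C - (exp C - 1) / C"
proof -
  define h where "h x = (x - 2) * exp x + x + 2" for x :: real
  have d: "\<And>x. (h has_real_derivative ((x - 1) * exp x + 1)) (at x)"
    unfolding h_def by (auto intro!: derivative_eq_intros simp: algebra_simps)
  have "h 1 \<le> h C"
  proof (rule DERIV_nonneg_imp_nondecreasing[OF assms])
    fix x assume "1 \<le> x" "x \<le> C"
    show "\<exists>y. (h has_real_derivative y) (at x) \<and> 0 \<le> y"
      using d[of x] \<open>1 \<le> x\<close> by (intro exI[of _ "(x - 1) * exp x + 1"]) (auto intro: add_nonneg_nonneg)
  qed
  moreover have "h 1 \<ge> 0" using exp_le by (simp add: h_def)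
  ultimately have "h C \<ge> 0" by linarith
  then have "2 * (exp C - 1) \<le> C * (1 + exp C)" by (simp add: h_def algebra_simps)
  then have "2 * (exp C - 1) / C \<le> 1 + exp C" using assms by (simp add: divide_le_eq mult.commute)
  then show ?thesis by (simp add: field_simps)
qed

lemma exp_chord: fixes l C :: real assumes "0 \<le> l" "l \<le> C" "C > 0"
  shows "exp l - 1 \<le> l * ((exp C - 1) / C)"
proof -
  have "exp ((1 - l/C) *\<^sub>R 0 + (l/C) *\<^sub>R C) \<le> (1 - l/C) * exp 0 + (l/C) * exp C"
    using assms by (intro convex_onD[OF exp_convex]) auto
  then have "exp l \<le> 1 - l/C + l/C * exp C" using assms by simp
  moreover have "l * ((exp C - 1)/C) = l/C * exp C - l/C" by (simp add: diff_divide_distrib right_diff_distrib)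
  ultimately show ?thesis by linarith
qed

lemma lip_step:
  fixes gg :: "'a::euclidean_space \<Rightarrow> 'a" and HH :: "'a \<Rightarrow> 'a \<Rightarrow> 'a"
  assumes der: "\<And>x. (gg has_derivative HH x) (at x)"
    and bnd: "\<And>x. onorm (HH x) \<le> L0 + L1 * norm (gg x)"
    and L1: "L1 > 0" and L0: "L0 \<ge> 0"
    and c_def: "c = L0 / L1 + norm (gg y)"
    and mu: "L1 * norm (q - p) = mu" "mu < 1"
  shows "(norm (gg q - gg y) + c) * (1 - mu) \<le> norm (gg p - gg y) + c"
proof -
  let ?S = "closed_segment p q"
  let ?phi = "\<lambda>z. norm (gg z - gg y)"
  have cont: "continuous_on ?S ?phi"
    using der by (intro continuous_intros has_derivative_continuous_on) (auto intro: has_derivative_at_withinI)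
  obtain z0 where z0: "z0 \<in> ?S" "\<And>z. z \<in> ?S \<Longrightarrow> ?phi z \<le> ?phi z0"
    using continuous_attains_sup[OF compact_segment _ cont] by auto
  define m where "m = ?phi z0"
  have diff: "norm (gg z - gg p) \<le> (L0 + L1 * (norm (gg y) + m)) * norm (z - p)" if z: "z \<in> ?S" for z
  proof (rule differentiable_bound[OF convex_closed_segment _ _ z])
    show "\<And>x. x \<in> ?S \<Longrightarrow> (gg has_derivative HH x) (at x within ?S)"
      using der by (auto intro: has_derivative_at_withinI)
    show "onorm (HH x) \<le> L0 + L1 * (norm (gg y) + m)" if "x \<in> ?S" for x
    proof -
      have "norm (gg x) \<le> norm (gg y) + ?phi x" using norm_triangle_ineq[of "gg x - gg y" "gg y"] by simp
      also have "\<dots> \<le> norm (gg y) + m" using z0(2)[OF that] m_def by simp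
      finally show ?thesis using bnd[of x] L1 by (meson add_left_mono mult_left_mono order.trans less_imp_le)
    qed
    show "p \<in> ?S" by simp
  qed
  have m0: "m \<ge> 0" by (simp add: m_def)
  have c0: "c \<ge> 0" using c_def L0 L1 by simp
  have "m \<le> ?phi p + norm (gg z0 - gg p)" unfolding m_def
    using norm_triangle_ineq[of "gg p - gg y" "gg z0 - gg p"] by simp
  also have "norm (gg z0 - gg p) \<le> (L0 + L1 * (norm (gg y) + m)) * norm (q - p)"
    using diff[OF z0(1)] segment_bound(1)[OF z0(1)]
    using L0 L1 m0 by (meson add_nonneg_nonneg mult_left_mono norm_ge_zero order.trans zero_le_mult_iff less_imp_le)
  also have "(L0 + L1 * (norm (gg y) + m)) * norm (q - p) = (c + m) * mu"
  proof -
    have e: "L0 + L1 * (norm (gg y) + m) = L1 * (c + m)" using c_def L1 by (simp add: field_simps)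
    show ?thesis unfolding e mu(1)[symmetric] by (simp add: algebra_simps)
  qed
  finally have m1: "m \<le> ?phi p + (c + m) * mu" by simp
  have "?phi q \<le> m" using z0(2)[of q] m_def by simp
  then have "(?phi q + c) * (1 - mu) \<le> (m + c) * (1 - mu)" using mu by (intro mult_right_mono) auto
  also have "\<dots> \<le> ?phi p + c" using m1 by (simp add: algebra_simps)
  finally show ?thesis .
qed

lemma lip_exp:
  fixes gg :: "'a::euclidean_space \<Rightarrow> 'a" and HH :: "'a \<Rightarrow> 'a \<Rightarrow> 'a"
  assumes der: "\<And>x. (gg has_derivative HH x) (at x)"
    and bnd: "\<And>x. onorm (HH x) \<le> L0 + L1 * norm (gg x)"
    and L1: "L1 > 0" and L0: "L0 \<ge> 0"
  shows "norm (gg x - gg y) \<le> (L0 / L1 + norm (gg y)) * (exp (L1 * norm (x - y)) - 1)"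
proof -
  define c where "c = L0 / L1 + norm (gg y)"
  define l where "l = L1 * norm (x - y)"
  have l0: "l \<ge> 0" using L1 by (simp add: l_def)
  have ev: "(norm (gg x - gg y) + c) * (1 + (- l) / real n) ^ n \<le> c" if n: "real n > l" for n
  proof -
    have n0: "n > 0" using n l0 by (cases n) auto
    define p where "p k = y + (real k / real n) *\<^sub>R (x - y)" for k
    define mu where "mu = l / real n"
    have mu1: "mu < 1" using n n0 by (simp add: mu_def)
    have "(norm (gg (p k) - gg y) + c) * (1 - mu) ^ k \<le> c" if "k \<le> n" for k
      using that
    proof (induction k)
      case 0
      then show ?case by (simp add: p_def)
    next
      case (Suc k)
      have "p (Suc k) - p k = (real (Suc k) / real n - real k / real n) *\<^sub>R (x - y)"
        by (simp add: p_def scaleR_diff_left)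
      also have "real (Suc k) / real n - real k / real n = 1 / real n"
        by (simp add: diff_divide_distrib[symmetric])
      finally have "p (Suc k) - p k = (1 / real n) *\<^sub>R (x - y)" .
      then have "L1 * norm (p (Suc k) - p k) = mu" using L1 n0 by (simp add: mu_def l_def)
      from lip_step[OF der bnd L1 L0 c_def this mu1]
      have st: "(norm (gg (p (Suc k)) - gg y) + c) * (1 - mu) \<le> norm (gg (p k) - gg y) + c" .
      have "(norm (gg (p (Suc k)) - gg y) + c) * (1 - mu) ^ Suc k
          = ((norm (gg (p (Suc k)) - gg y) + c) * (1 - mu)) * (1 - mu) ^ k" by simp
      also have "\<dots> \<le> (norm (gg (p k) - gg y) + c) * (1 - mu) ^ k"
        using st mu1 by (intro mult_right_mono) auto
      also have "\<dots> \<le> c" using Suc by simp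
      finally show ?case .
    qed
    from this[of n] have "(norm (gg (p n) - gg y) + c) * (1 - mu) ^ n \<le> c" by simp
    moreover have "p n = x" using n0 by (simp add: p_def)
    ultimately show ?thesis by (simp add: mu_def)
  qed
  have "(norm (gg x - gg y) + c) * exp (- l) \<le> c"
  proof (rule tendsto_le[OF sequentially_bot tendsto_const])
    show "(\<lambda>n. (norm (gg x - gg y) + c) * (1 + (- l) / real n) ^ n) \<longlonglongrightarrow> (norm (gg x - gg y) + c) * exp (- l)"
      by (intro tendsto_mult tendsto_const tendsto_exp_limit_sequentially)
    show "\<forall>\<^sub>F n in sequentially. (norm (gg x - gg y) + c) * (1 + - l / real n) ^ n \<le> c"
    proof (rule eventually_sequentiallyI[of "nat (ceiling l) + 1"])
      fix n assume "nat (ceiling l) + 1 \<le> n"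
      then have "real n > l" by linarith
      then show "(norm (gg x - gg y) + c) * (1 + - l / real n) ^ n \<le> c" by (rule ev)
    qed
  qed
  then have "norm (gg x - gg y) + c \<le> c * exp l"
    by (simp add: exp_minus field_simps)
  then show ?thesis unfolding c_def l_def by (simp add: algebra_simps)
qed

lemma lip_AB:
  fixes gg :: "'a::euclidean_space \<Rightarrow> 'a" and HH :: "'a \<Rightarrow> 'a \<Rightarrow> 'a"
  assumes der: "\<And>x. (gg has_derivative HH x) (at x)"
    and bnd: "\<And>x. onorm (HH x) \<le> L0 + L1 * norm (gg x)"
    and L1: "L1 > 0" and L0: "L0 \<ge> 0" and C: "C \<ge> 1"
    and close: "L1 * norm (x - y) \<le> C"
  shows "norm (gg x - gg y) \<le> ((1 + exp C - (exp C - 1) / C) * L0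
            + ((exp C - 1) / C) * L1 * norm (gg y)) * norm (x - y)"
proof -
  define B where "B = (exp C - 1) / C"
  define A where "A = 1 + exp C - (exp C - 1) / C"
  have AB: "B \<le> A" using AB_ge[OF C] by (simp add: A_def B_def)
  define u where "u = norm (x - y)"
  have u0: "u \<ge> 0" by (simp add: u_def)
  have "norm (gg x - gg y) \<le> (L0 / L1 + norm (gg y)) * (exp (L1 * u) - 1)"
    using lip_exp[OF der bnd L1 L0] by (simp add: u_def)
  also have "\<dots> \<le> (L0 / L1 + norm (gg y)) * ((L1 * u) * B)"
    using exp_chord[of "L1 * u" C] L1 L0 u0 close C unfolding B_def u_def
    by (intro mult_left_mono) auto
  also have "\<dots> = (B * L0 + B * L1 * norm (gg y)) * u" using L1 by (simp add: field_simps)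
  also have "\<dots> \<le> (A * L0 + B * L1 * norm (gg y)) * u"
    using AB L0 u0 by (intro mult_right_mono add_right_mono mult_right_mono) auto
  finally show ?thesis unfolding A_def B_def u_def .
qed

lemma tri4: fixes a b c d :: "'a::real_normed_vector"
  shows "norm (a + b - c + d) \<le> norm a + norm b + norm c + norm d"
proof -
  have "norm (a + b - c + d) \<le> norm (a + b - c) + norm d" by (rule norm_triangle_ineq)
  also have "norm (a + b - c) \<le> norm (a + b) + norm c" by (rule norm_triangle_ineq4)
  also have "norm (a + b) \<le> norm a + norm b" by (rule norm_triangle_ineq)
  finally show ?thesis by simp
qed

lemma path_bound:
  fixes gF :: "nat \<Rightarrow> 'a::euclidean_space \<Rightarrow> 'b \<Rightarrow> 'a" and g :: "nat \<Rightarrow> 'a \<Rightarrow> 'a"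
    and N :: nat and \<eta> \<gamma> :: real and xbar :: 'a and tx :: "nat \<Rightarrow> 'm \<Rightarrow> 'b"
    and xs :: "nat \<Rightarrow> nat \<Rightarrow> 'm \<Rightarrow> 'b" and i :: nat and \<omega> :: 'm
  defines "X \<equiv> \<lambda>s. ep_x N \<eta> \<gamma> gF xbar tx xs i s \<omega>"
  defines "G \<equiv> ep_G N gF xbar tx \<omega>"
  assumes ev: "\<omega> \<in> ep_event N \<eta> \<gamma> gF xbar tx"
    and eta: "\<eta> > 0" and sig: "\<sigma> \<ge> 0" and L1: "L1 > 0"
    and n0: "norm (gF i xbar (tx i \<omega>) - g i xbar) \<le> \<sigma>"
    and nS: "\<And>s. s < k \<Longrightarrow> norm (gF i (X s) (xs i s \<omega>) - g i (X s)) \<le> \<sigma>"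
    and lip: "\<And>z. L1 * norm (z - xbar) \<le> C \<Longrightarrow> norm (g i z - g i xbar) \<le> K * norm (z - xbar)"
    and K: "2 * \<eta> * real I * K \<le> 1" "K \<ge> 0"
    and st2: "2 * \<eta> * real I * (2 * \<sigma> + \<gamma> / \<eta>) \<le> C / L1"
    and kI: "k \<le> I"
  shows "norm (X k - xbar) \<le> 2 * \<eta> * real k * (2 * \<sigma> + norm G)"
  using kI nS
proof (induction k)
  case 0
  then show ?case by (simp add: X_def)
next
  case (Suc k)
  define Q where "Q = 2 * \<sigma> + norm G"
  have Q0: "Q \<ge> 0" using sig by (simp add: Q_def)
  have GB: "norm G \<le> \<gamma> / \<eta>" using ev by (simp add: ep_event_def G_def)
  have IH: "norm (X k - xbar) \<le> 2 * \<eta> * real k * Q" using Suc by (simp add: Q_def)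
  define D where "D = norm (X k - xbar)"
  have "2 * \<eta> * real k * Q \<le> 2 * \<eta> * real I * Q"
    using Suc.prems(1) Q0 eta by (intro mult_right_mono mult_left_mono) auto
  then have DI: "D \<le> 2 * \<eta> * real I * Q" using IH unfolding D_def by linarith
  have "2 * \<eta> * real I * Q \<le> 2 * \<eta> * real I * (2 * \<sigma> + \<gamma> / \<eta>)"
    using GB eta unfolding Q_def by (intro mult_left_mono) auto
  then have "L1 * D \<le> L1 * (2 * \<eta> * real I * (2 * \<sigma> + \<gamma> / \<eta>))"
    using DI L1 by (intro mult_left_mono) auto
  also have "\<dots> \<le> L1 * (C / L1)" using st2 L1 by (intro mult_left_mono) auto
  finally have close: "L1 * D \<le> C" using L1 by simp
  define gk where "gk = gF i (X k) (xs i k \<omega>) - ep_Gi (gF i) xbar (tx i) \<omega> + G"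
  have xs: "X (Suc k) = X k - \<eta> *\<^sub>R gk"
    using ev by (simp add: X_def gk_def G_def Let_def)
  have "gk = (gF i (X k) (xs i k \<omega>) - g i (X k)) + (g i (X k) - g i xbar)
            - (gF i xbar (tx i \<omega>) - g i xbar) + G"
    by (simp add: gk_def ep_Gi_def)
  then have "norm gk \<le> norm (gF i (X k) (xs i k \<omega>) - g i (X k)) + norm (g i (X k) - g i xbar)
            + norm (gF i xbar (tx i \<omega>) - g i xbar) + norm G"
    using tri4 by metis
  also have "\<dots> \<le> \<sigma> + K * D + \<sigma> + norm G"
    using Suc.prems(2)[of k] lip[OF close[unfolded D_def]] n0 by (simp add: D_def)
  finally have ng: "norm gk \<le> Q + K * D" by (simp add: Q_def)
  have "norm (X (Suc k) - xbar) = norm ((X k - xbar) - \<eta> *\<^sub>R gk)" by (simp add: xs algebra_simps)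
  also have "\<dots> \<le> D + \<eta> * norm gk" using norm_triangle_ineq4[of "X k - xbar" "\<eta> *\<^sub>R gk"] eta by (simp add: D_def)
  also have "\<dots> \<le> D + \<eta> * (Q + K * D)" using ng eta by (simp add: mult_left_mono)
  also have "\<dots> = D + \<eta> * Q + \<eta> * K * D" by (simp add: algebra_simps)
  also have "\<eta> * K * D \<le> \<eta> * K * (2 * \<eta> * real I * Q)" using DI eta K by (intro mult_left_mono) auto
  also have "\<eta> * K * (2 * \<eta> * real I * Q) = \<eta> * Q * (2 * \<eta> * real I * K)" by simp
  also have "\<dots> \<le> \<eta> * Q" using K Q0 eta by (simp add: mult_left_le)
  finally have "norm (X (Suc k) - xbar) \<le> D + 2 * \<eta> * Q" by (simp add: algebra_simps)
  then show ?case using IH unfolding D_def Q_def by (simp add: algebra_simps)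
qed

lemma ep_G_cong:
  assumes "\<And>j. j < N \<Longrightarrow> tx j \<omega> = tx' j \<omega>'"
  shows "ep_G N gF xbar tx \<omega> = ep_G N gF xbar tx' \<omega>'"
  unfolding ep_G_def ep_Gi_def using assms by (intro arg_cong2[where f=scaleR] refl sum.cong) auto

lemma ep_x_cong:
  assumes i: "i < N" and tx: "\<And>j. j < N \<Longrightarrow> tx j \<omega> = tx' j \<omega>'"
    and xs: "\<And>k'. k' < k \<Longrightarrow> xs i k' \<omega> = xs' i k' \<omega>'"
  shows "ep_x N \<eta> \<gamma> gF xbar tx xs i k \<omega> = ep_x N \<eta> \<gamma> gF xbar tx' xs' i k \<omega>'"
  using xs
proof (induction k)
  case 0
  then show ?case by simp
next
  case (Suc k)
  have G: "ep_G N gF xbar tx \<omega> = ep_G N gF xbar tx' \<omega>'" by (rule ep_G_cong) (rule tx)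
  have E: "(\<omega> \<in> ep_event N \<eta> \<gamma> gF xbar tx) = (\<omega>' \<in> ep_event N \<eta> \<gamma> gF xbar tx')"
    by (simp add: ep_event_def G)
  have Gi: "ep_Gi (gF i) xbar (tx i) \<omega> = ep_Gi (gF i) xbar (tx' i) \<omega>'"
    using tx[OF i] by (simp add: ep_Gi_def)
  show ?case using Suc by (simp add: Let_def G E Gi)
qed

lemma gF_comp_meas:
  assumes gm: "(\<lambda>(x, \<xi>). gF x \<xi>) \<in> borel_measurable (borel \<Otimes>\<^sub>M D)"
    and f: "f \<in> borel_measurable \<Omega>" and h: "h \<in> measurable \<Omega> D"
  shows "(\<lambda>\<omega>. gF (f \<omega>) (h \<omega>)) \<in> borel_measurable \<Omega>"
  using measurable_compose[OF measurable_Pair[OF f h] gm] by simp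

lemma ep_G_meas:
  fixes gF :: "nat \<Rightarrow> 'a::euclidean_space \<Rightarrow> 'b \<Rightarrow> 'a"
  assumes gm: "\<And>j. j < N \<Longrightarrow> (\<lambda>(x, \<xi>). gF j x \<xi>) \<in> borel_measurable (borel \<Otimes>\<^sub>M D j)"
    and tx: "\<And>j. j < N \<Longrightarrow> tx j \<in> measurable \<Omega> (D j)"
  shows "(\<lambda>\<omega>. ep_G N gF xbar tx \<omega>) \<in> borel_measurable \<Omega>"
proof -
  have "(\<lambda>\<omega>. gF j xbar (tx j \<omega>)) \<in> borel_measurable \<Omega>" if "j < N" for j
    using gF_comp_meas[OF gm[OF that] measurable_const tx[OF that]] by simp
  then have "(\<lambda>\<omega>. \<Sum>j<N. gF j xbar (tx j \<omega>)) \<in> borel_measurable \<Omega>"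
    by (rule borel_measurable_sum[of "{..<N}" "\<lambda>j \<omega>. gF j xbar (tx j \<omega>)"]) auto
  then show ?thesis unfolding ep_G_def ep_Gi_def by measurable
qed

lemma ep_x_meas:
  fixes gF :: "nat \<Rightarrow> 'a::euclidean_space \<Rightarrow> 'b \<Rightarrow> 'a"
  assumes i: "i < N"
    and gm: "\<And>j. j < N \<Longrightarrow> (\<lambda>(x, \<xi>). gF j x \<xi>) \<in> borel_measurable (borel \<Otimes>\<^sub>M D j)"
    and tx: "\<And>j. j < N \<Longrightarrow> tx j \<in> measurable \<Omega> (D j)"
    and xs: "\<And>k'. k' < k \<Longrightarrow> xs i k' \<in> measurable \<Omega> (D i)"
  shows "(\<lambda>\<omega>. ep_x N \<eta> \<gamma> gF xbar tx xs i k \<omega>) \<in> borel_measurable \<Omega>"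
  using xs
proof (induction k)
  case 0
  then show ?case by simp
next
  case (Suc k)
  have Xk: "(\<lambda>\<omega>. ep_x N \<eta> \<gamma> gF xbar tx xs i k \<omega>) \<in> borel_measurable \<Omega>" using Suc by auto
  have G: "(\<lambda>\<omega>. ep_G N gF xbar tx \<omega>) \<in> borel_measurable \<Omega>" by (rule ep_G_meas[OF gm tx])
  have Gi: "(\<lambda>\<omega>. ep_Gi (gF i) xbar (tx i) \<omega>) \<in> borel_measurable \<Omega>"
    using gF_comp_meas[OF gm[OF i] measurable_const tx[OF i]] by (simp add: ep_Gi_def)
  have F: "(\<lambda>\<omega>. gF i (ep_x N \<eta> \<gamma> gF xbar tx xs i k \<omega>) (xs i k \<omega>)) \<in> borel_measurable \<Omega>"
    by (rule gF_comp_meas[OF gm[OF i] Xk Suc.prems]) simp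
  define gk where "gk \<omega> = gF i (ep_x N \<eta> \<gamma> gF xbar tx xs i k \<omega>) (xs i k \<omega>) - ep_Gi (gF i) xbar (tx i) \<omega> + ep_G N gF xbar tx \<omega>" for \<omega>
  have gk: "gk \<in> borel_measurable \<Omega>" unfolding gk_def
    by (rule borel_measurable_add[OF borel_measurable_diff[OF F Gi] G])
  have P: "Measurable.pred \<Omega> (\<lambda>\<omega>. \<omega> \<in> ep_event N \<eta> \<gamma> gF xbar tx)"
    unfolding ep_event_def mem_Collect_eq using G by measurable
  have eq: "(\<lambda>\<omega>. ep_x N \<eta> \<gamma> gF xbar tx xs i (Suc k) \<omega>) = (\<lambda>\<omega>. if \<omega> \<in> ep_event N \<eta> \<gamma> gF xbar tx
      then ep_x N \<eta> \<gamma> gF xbar tx xs i k \<omega> - \<eta> *\<^sub>R gk \<omega>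
      else ep_x N \<eta> \<gamma> gF xbar tx xs i k \<omega> - (\<gamma> / norm (gk \<omega>)) *\<^sub>R gk \<omega>)"
    by (rule ext) (simp add: Let_def gk_def)
  show ?case unfolding eq using P Xk gk by measurable
qed

lemma noise_AE:
  fixes M :: "'m measure" and D :: "nat \<Rightarrow> 'b measure"
    and g :: "nat \<Rightarrow> 'a::euclidean_space \<Rightarrow> 'a"
    and gF :: "nat \<Rightarrow> 'a \<Rightarrow> 'b \<Rightarrow> 'a"
    and tx :: "nat \<Rightarrow> 'm \<Rightarrow> 'b" and xs :: "nat \<Rightarrow> nat \<Rightarrow> 'm \<Rightarrow> 'b"
    and N I :: nat and \<eta> \<gamma> \<sigma> :: real and xbar :: 'a
  assumes M: "prob_space M"
    and Dprob: "\<And>i. i < N \<Longrightarrow> prob_space (D i)"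
    and gF_meas: "\<And>i. i < N \<Longrightarrow> (\<lambda>(x, \<xi>). gF i x \<xi>) \<in> borel_measurable (borel \<Otimes>\<^sub>M D i)"
    and noise: "\<And>i x. i < N \<Longrightarrow> (AE \<xi> in D i. norm (gF i x \<xi> - g i x) \<le> \<sigma>)"
    and gmeas: "g i \<in> borel_measurable borel"
    and tx_dist: "\<And>i. i < N \<Longrightarrow> tx i \<in> measurable M (D i) \<and> distr M (D i) (tx i) = D i"
    and xs_dist: "\<And>i k. i < N \<Longrightarrow> k < I \<Longrightarrow> xs i k \<in> measurable M (D i) \<and> distr M (D i) (xs i k) = D i"
    and indep: "prob_space.indep_vars M (\<lambda>j. case j of Inl i \<Rightarrow> D i | Inr (i, k) \<Rightarrow> D i)
                  (\<lambda>j. case j of Inl i \<Rightarrow> tx i | Inr (i, k) \<Rightarrow> xs i k)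
                  (Inl ` {..<N} \<union> Inr ` ({..<N} \<times> {..<I}))"
    and i: "i < N" and s: "s < I"
  shows "AE \<omega> in M. norm (gF i (ep_x N \<eta> \<gamma> gF xbar tx xs i s \<omega>) (xs i s \<omega>)
                      - g i (ep_x N \<eta> \<gamma> gF xbar tx xs i s \<omega>)) \<le> \<sigma>"
proof -
  interpret P: prob_space M by (rule M)
  define MF where "MF = (\<lambda>j :: nat + nat \<times> nat. case j of Inl i \<Rightarrow> D i | Inr (i, k) \<Rightarrow> D i)"
  define XF where "XF = (\<lambda>j :: nat + nat \<times> nat. case j of Inl i \<Rightarrow> tx i | Inr (i, k) \<Rightarrow> xs i k)"
  define K where "K = Inl ` {..<N} \<union> Inr ` ({i} \<times> {..<s})"
  define L where "L = {Inr (i, s) :: nat + nat \<times> nat}"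
  define X where "X = (\<lambda>\<omega>. ep_x N \<eta> \<gamma> gF xbar tx xs i s \<omega>)"
  have ind: "P.indep_var (PiM K MF) (\<lambda>\<omega>. restrict (\<lambda>j. XF j \<omega>) K) (PiM L MF) (\<lambda>\<omega>. restrict (\<lambda>j. XF j \<omega>) L)"
    using i s by (intro P.indep_var_restrict[OF indep[folded MF_def XF_def]]) (auto simp: K_def L_def)
  define h1 where "h1 = (\<lambda>\<omega>'. ep_x N \<eta> \<gamma> gF xbar (\<lambda>j \<omega>'. \<omega>' (Inl j)) (\<lambda>i' k \<omega>'. \<omega>' (Inr (i', k))) i s \<omega>')"
  define h2 where "h2 = (\<lambda>\<omega>' :: nat + nat \<times> nat \<Rightarrow> 'b. \<omega>' (Inr (i, s)))"
  have h1m: "h1 \<in> borel_measurable (PiM K MF)"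
    unfolding h1_def
  proof (rule ep_x_meas[OF i gF_meas])
    show "(\<lambda>\<omega>'. \<omega>' (Inl j)) \<in> measurable (PiM K MF) (D j)" if "j < N" for j
      using measurable_component_singleton[of "Inl j" K MF] that by (simp add: K_def MF_def)
    show "(\<lambda>\<omega>'. \<omega>' (Inr (i, k'))) \<in> measurable (PiM K MF) (D i)" if "k' < s" for k'
      using measurable_component_singleton[of "Inr (i, k')" K MF] that by (simp add: K_def MF_def)
  qed
  have h2m: "h2 \<in> measurable (PiM L MF) (D i)"
    using measurable_component_singleton[of "Inr (i, s)" L MF] by (simp add: L_def MF_def h2_def)
  define RK where "RK = (\<lambda>\<omega>. restrict (\<lambda>j. XF j \<omega>) K)"
  define RL where "RL = (\<lambda>\<omega>. restrict (\<lambda>j. XF j \<omega>) L)"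
  have e1: "h1 (RK \<omega>) = X \<omega>" for \<omega>
    unfolding h1_def X_def RK_def
    by (rule ep_x_cong[OF i]) (auto simp: K_def XF_def)
  have e2: "h2 (RL \<omega>) = xs i s \<omega>" for \<omega>
    by (auto simp: h2_def L_def XF_def RL_def)
  have RKm: "RK \<in> measurable M (PiM K MF)" and RLm: "RL \<in> measurable M (PiM L MF)"
    using ind unfolding P.indep_var_distribution_eq RK_def RL_def by auto
  have deq: "distr M (PiM K MF) RK \<Otimes>\<^sub>M distr M (PiM L MF) RL = distr M (PiM K MF \<Otimes>\<^sub>M PiM L MF) (\<lambda>\<omega>. (RK \<omega>, RL \<omega>))"
    using ind unfolding P.indep_var_distribution_eq RK_def RL_def by auto
  have xsm: "xs i s \<in> measurable M (D i)" using xs_dist i s by auto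
  interpret PS: pair_sigma_finite "distr M (PiM K MF) RK" "distr M (PiM L MF) RL"
    by (intro pair_sigma_finite.intro prob_space_imp_sigma_finite P.prob_space_distr RKm RLm)
  define Pr where "Pr = (\<lambda>p. norm (gF i (h1 (fst p)) (h2 (snd p)) - g i (h1 (fst p))) \<le> \<sigma>)"
  have "{p \<in> space (distr M (PiM K MF) RK \<Otimes>\<^sub>M distr M (PiM L MF) RL). Pr p}
          \<in> sets (distr M (PiM K MF) RK \<Otimes>\<^sub>M distr M (PiM L MF) RL)"
  proof -
    have hh: "(\<lambda>p. (h1 (fst p), h2 (snd p))) \<in> measurable (PiM K MF \<Otimes>\<^sub>M PiM L MF) (borel \<Otimes>\<^sub>M D i)"
      using h1m h2m by measurable
    have f: "(\<lambda>p. gF i (h1 (fst p)) (h2 (snd p))) \<in> borel_measurable (PiM K MF \<Otimes>\<^sub>M PiM L MF)"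
      using measurable_compose[OF hh gF_meas[OF i]] by simp
    have gg: "(\<lambda>p. g i (h1 (fst p))) \<in> borel_measurable (PiM K MF \<Otimes>\<^sub>M PiM L MF)"
      using measurable_compose[OF measurable_compose[OF measurable_fst[of "PiM K MF" "PiM L MF"] h1m] gmeas] by (simp add: o_def)
    have "(\<lambda>p. norm (gF i (h1 (fst p)) (h2 (snd p)) - g i (h1 (fst p)))) \<in> borel_measurable (PiM K MF \<Otimes>\<^sub>M PiM L MF)"
      using f gg by measurable
    then have "Measurable.pred (PiM K MF \<Otimes>\<^sub>M PiM L MF) Pr" unfolding Pr_def by measurable
    then have "Measurable.pred (distr M (PiM K MF) RK \<Otimes>\<^sub>M distr M (PiM L MF) RL) Pr"
      by (subst measurable_cong_sets[OF sets_pair_measure_cong[OF sets_distr sets_distr] refl])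
    then show ?thesis by measurable
  qed
  moreover have "AE a in distr M (PiM K MF) RK. AE b in distr M (PiM L MF) RL. Pr (a, b)"
  proof (rule AE_I2)
    fix a
    have "distr (distr M (PiM L MF) RL) (D i) h2 = distr M (D i) (h2 \<circ> RL)"
      by (rule distr_distr[OF h2m RLm])
    also have "h2 \<circ> RL = xs i s" using e2 by auto
    also have "distr M (D i) (xs i s) = D i" using xs_dist[OF i s] by simp
    finally have dd: "distr (distr M (PiM L MF) RL) (D i) h2 = D i" .
    have "AE \<xi> in D i. norm (gF i (h1 a) \<xi> - g i (h1 a)) \<le> \<sigma>" by (rule noise[OF i])
    then have "AE \<xi> in distr (distr M (PiM L MF) RL) (D i) h2. norm (gF i (h1 a) \<xi> - g i (h1 a)) \<le> \<sigma>"
      unfolding dd .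
    note ae1 = this
    have h2m': "h2 \<in> measurable (distr M (PiM L MF) RL) (D i)" using h2m by simp
    from AE_distrD[OF h2m' ae1]
    show "AE b in distr M (PiM L MF) RL. Pr (a, b)" by (simp add: Pr_def)
  qed
  ultimately have "AE p in distr M (PiM K MF) RK \<Otimes>\<^sub>M distr M (PiM L MF) RL. Pr p"
    by (rule PS.AE_pair_measure)
  then have "AE p in distr M (PiM K MF \<Otimes>\<^sub>M PiM L MF) (\<lambda>\<omega>. (RK \<omega>, RL \<omega>)). Pr p"
    unfolding deq .
  from AE_distrD[OF measurable_Pair[OF RKm RLm] this]
  show ?thesis by (simp add: Pr_def e1 e2 X_def)
qed

lemma arith_b:
  fixes \<sigma> \<eta> \<gamma> Gn F r :: real
  assumes s: "\<sigma> \<ge> 0" and e: "\<eta> > 0" and g: "\<gamma> > 0" and G0: "0 \<le> Gn" and G1: "Gn \<le> F + \<sigma>"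
    and G2: "Gn \<le> \<gamma> / \<eta>" and r: "r \<ge> 0"
  shows "(2 * \<eta> * r * (2 * \<sigma> + Gn))\<^sup>2 \<le> 36 * r\<^sup>2 * \<eta>\<^sup>2 * F\<^sup>2 + 126 * r\<^sup>2 * \<eta>\<^sup>2 * \<sigma>\<^sup>2"
    and "(2 * \<eta> * r * (2 * \<sigma> + Gn))\<^sup>2 \<le> 18 * r\<^sup>2 * \<eta> * \<gamma> * F + 18 * r\<^sup>2 * \<eta>\<^sup>2 * (\<gamma> * \<sigma> / \<eta> + 5 * \<sigma>\<^sup>2)"
proof -
  have F0: "F \<ge> 0 \<or> True" by simp
  have q1: "(2 * \<sigma> + Gn)\<^sup>2 \<le> (F + 3 * \<sigma>)\<^sup>2"
    using G0 G1 s by (intro power_mono) auto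
  also have "\<dots> \<le> 2 * F\<^sup>2 + 18 * \<sigma>\<^sup>2"
    using sum_squares_ge_zero[of "F - 3*\<sigma>" 0] by (simp add: power2_eq_square algebra_simps)
  finally have q1: "(2 * \<sigma> + Gn)\<^sup>2 \<le> 2 * F\<^sup>2 + 18 * \<sigma>\<^sup>2" .
  have ee: "(2 * \<eta> * r * (2 * \<sigma> + Gn))\<^sup>2 = 4 * r\<^sup>2 * \<eta>\<^sup>2 * (2 * \<sigma> + Gn)\<^sup>2"
    by (simp add: power2_eq_square)
  have c0: "0 \<le> 4 * r\<^sup>2 * \<eta>\<^sup>2" by simp
  have "4 * r\<^sup>2 * \<eta>\<^sup>2 * (2 * \<sigma> + Gn)\<^sup>2 \<le> 4 * r\<^sup>2 * \<eta>\<^sup>2 * (2 * F\<^sup>2 + 18 * \<sigma>\<^sup>2)"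
    by (rule mult_left_mono[OF q1 c0])
  also have "\<dots> \<le> 36 * r\<^sup>2 * \<eta>\<^sup>2 * F\<^sup>2 + 126 * r\<^sup>2 * \<eta>\<^sup>2 * \<sigma>\<^sup>2"
    by (simp add: algebra_simps)
  finally show "(2 * \<eta> * r * (2 * \<sigma> + Gn))\<^sup>2 \<le> 36 * r\<^sup>2 * \<eta>\<^sup>2 * F\<^sup>2 + 126 * r\<^sup>2 * \<eta>\<^sup>2 * \<sigma>\<^sup>2"
    unfolding ee .
  have q2: "(2 * \<sigma> + Gn)\<^sup>2 \<le> 8 * \<sigma>\<^sup>2 + 2 * Gn\<^sup>2"
    using sum_squares_ge_zero[of "2*\<sigma> - Gn" 0] by (simp add: power2_eq_square algebra_simps)
  have "Gn\<^sup>2 \<le> Gn * (\<gamma> / \<eta>)" using mult_left_mono[OF G2 G0] by (simp add: power2_eq_square)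
  also have "\<dots> \<le> (F + \<sigma>) * (\<gamma> / \<eta>)" using G1 g e by (intro mult_right_mono) auto
  finally have q3: "\<eta> * Gn\<^sup>2 \<le> (F + \<sigma>) * \<gamma>" using e by (simp add: field_simps)
  have "4 * r\<^sup>2 * \<eta>\<^sup>2 * (2 * \<sigma> + Gn)\<^sup>2 \<le> 4 * r\<^sup>2 * \<eta>\<^sup>2 * (8 * \<sigma>\<^sup>2 + 2 * Gn\<^sup>2)"
    by (rule mult_left_mono[OF q2 c0])
  also have "\<dots> = 32 * r\<^sup>2 * \<eta>\<^sup>2 * \<sigma>\<^sup>2 + 8 * r\<^sup>2 * \<eta> * (\<eta> * Gn\<^sup>2)"
    by (simp add: power2_eq_square algebra_simps)
  also have "\<dots> \<le> 32 * r\<^sup>2 * \<eta>\<^sup>2 * \<sigma>\<^sup>2 + 8 * r\<^sup>2 * \<eta> * ((F + \<sigma>) * \<gamma>)"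
    using q3 e by (intro add_left_mono mult_left_mono) auto
  also have "\<dots> \<le> 18 * r\<^sup>2 * \<eta> * \<gamma> * F + 18 * r\<^sup>2 * \<eta>\<^sup>2 * (\<gamma> * \<sigma> / \<eta> + 5 * \<sigma>\<^sup>2)"
  proof -
    have a: "18 * r\<^sup>2 * \<eta>\<^sup>2 * (\<gamma> * \<sigma> / \<eta> + 5 * \<sigma>\<^sup>2) = 18 * r\<^sup>2 * \<eta> * \<gamma> * \<sigma> + 90 * r\<^sup>2 * \<eta>\<^sup>2 * \<sigma>\<^sup>2"
      using e by (simp add: power2_eq_square field_simps)
    have b1: "0 \<le> r\<^sup>2 * \<eta> * \<gamma> * (F + \<sigma>)" using e g G0 G1 by (intro mult_nonneg_nonneg) auto
    have b2: "0 \<le> r\<^sup>2 * \<eta>\<^sup>2 * \<sigma>\<^sup>2" by simp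
    have d: "(18 * r\<^sup>2 * \<eta> * \<gamma> * F + (18 * r\<^sup>2 * \<eta> * \<gamma> * \<sigma> + 90 * r\<^sup>2 * \<eta>\<^sup>2 * \<sigma>\<^sup>2))
        - (32 * r\<^sup>2 * \<eta>\<^sup>2 * \<sigma>\<^sup>2 + 8 * r\<^sup>2 * \<eta> * ((F + \<sigma>) * \<gamma>))
        = 10 * (r\<^sup>2 * \<eta> * \<gamma> * (F + \<sigma>)) + 58 * (r\<^sup>2 * \<eta>\<^sup>2 * \<sigma>\<^sup>2)"
      by (simp add: algebra_simps)
    show ?thesis unfolding a using d b1 b2 by linarith
  qed
  finally show "(2 * \<eta> * r * (2 * \<sigma> + Gn))\<^sup>2 \<le> 18 * r\<^sup>2 * \<eta> * \<gamma> * F + 18 * r\<^sup>2 * \<eta>\<^sup>2 * (\<gamma> * \<sigma> / \<eta> + 5 * \<sigma>\<^sup>2)"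
    unfolding ee .
qed

theorem lemma3:
  fixes M :: "'m measure" and D :: "nat \<Rightarrow> 'b measure"
    and f :: "nat \<Rightarrow> 'a::euclidean_space \<Rightarrow> real"
    and g :: "nat \<Rightarrow> 'a \<Rightarrow> 'a" and H :: "nat \<Rightarrow> 'a \<Rightarrow> 'a \<Rightarrow> 'a"
    and gF :: "nat \<Rightarrow> 'a \<Rightarrow> 'b \<Rightarrow> 'a"
    and tx :: "nat \<Rightarrow> 'm \<Rightarrow> 'b" and xs :: "nat \<Rightarrow> nat \<Rightarrow> 'm \<Rightarrow> 'b"
    and N I :: nat and \<eta> \<gamma> L0 L1 \<sigma> \<kappa> \<rho> C :: real and xbar :: 'a
  assumes N: "N \<ge> 1" and I: "I \<ge> 1" and eta: "\<eta> > 0" and gam: "\<gamma> > 0"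
    and L0: "L0 \<ge> 0" and L1: "L1 > 0" and kappa: "\<kappa> \<ge> 0" and rho: "\<rho> \<ge> 1"
    \<comment> \<open>twice differentiable, g i = gradient of f i, H i x = Hessian of f i at x\<close>
    and grad: "\<And>i x. i < N \<Longrightarrow> (f i has_derivative (\<lambda>h. g i x \<bullet> h)) (at x)"
    and hess: "\<And>i x. i < N \<Longrightarrow> (g i has_derivative H i x) (at x)"
    and smooth: "\<And>i x. i < N \<Longrightarrow> onorm (H i x) \<le> L0 + L1 * norm (g i x)"
    \<comment> \<open>stochastic gradient oracle\<close>
    and Dprob: "\<And>i. i < N \<Longrightarrow> prob_space (D i)"
    and gF_meas: "\<And>i. i < N \<Longrightarrow> (\<lambda>(x, \<xi>). gF i x \<xi>) \<in> borel_measurable (borel \<Otimes>\<^sub>M D i)"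
    and unbiased: "\<And>i x. i < N \<Longrightarrow> integrable (D i) (gF i x) \<and> integral\<^sup>L (D i) (gF i x) = g i x"
    and noise: "\<And>i x. i < N \<Longrightarrow> (AE \<xi> in D i. norm (gF i x \<xi> - g i x) \<le> \<sigma>)"
    \<comment> \<open>heterogeneity, with grad f = (1/N) sum_i grad f_i\<close>
    and hetero: "\<And>i x. i < N \<Longrightarrow>
        norm (g i x) \<le> \<kappa> + \<rho> * norm ((1 / real N) *\<^sub>R (\<Sum>j<N. g j x))"
    \<comment> \<open>parameters\<close>
    and C: "C \<ge> 1"
    and step1: "2 * \<eta> * real I * ((1 + exp C - (exp C - 1) / C) * L0 + ((exp C - 1) / C) * L1 * \<kappa>
                 + ((exp C - 1) / C) * L1 * \<rho> * (\<sigma> + \<gamma> / \<eta>)) \<le> 1"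
    and step2: "max (2 * \<eta> * real I * (2 * \<sigma> + \<gamma> / \<eta>)) (\<gamma> * real I) \<le> C / L1"
    \<comment> \<open>fresh independent samples of the round\<close>
    and M: "prob_space M"
    and tx_dist: "\<And>i. i < N \<Longrightarrow> tx i \<in> measurable M (D i) \<and> distr M (D i) (tx i) = D i"
    and xs_dist: "\<And>i k. i < N \<Longrightarrow> k < I \<Longrightarrow> xs i k \<in> measurable M (D i) \<and> distr M (D i) (xs i k) = D i"
    and indep: "prob_space.indep_vars M (\<lambda>j. case j of Inl i \<Rightarrow> D i | Inr (i, k) \<Rightarrow> D i)
                  (\<lambda>j. case j of Inl i \<Rightarrow> tx i | Inr (i, k) \<Rightarrow> xs i k)
                  (Inl ` {..<N} \<union> Inr ` ({..<N} \<times> {..<I}))"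
    and i: "i < N" and t: "1 \<le> k" "k \<le> I"
  shows
    "(\<integral>\<omega>. indicator (ep_event N \<eta> \<gamma> gF xbar tx) \<omega> * (norm (ep_x N \<eta> \<gamma> gF xbar tx xs i k \<omega> - xbar))\<^sup>2 \<partial>M)
       \<le> 36 * measure M (ep_event N \<eta> \<gamma> gF xbar tx \<inter> space M) * (real I)\<^sup>2 * \<eta>\<^sup>2
            * (norm ((1 / real N) *\<^sub>R (\<Sum>j<N. g j xbar)))\<^sup>2
         + 126 * measure M (ep_event N \<eta> \<gamma> gF xbar tx \<inter> space M) * (real I)\<^sup>2 * \<eta>\<^sup>2 * \<sigma>\<^sup>2
     \<and> (\<integral>\<omega>. indicator (ep_event N \<eta> \<gamma> gF xbar tx) \<omega> * (norm (ep_x N \<eta> \<gamma> gF xbar tx xs i k \<omega> - xbar))\<^sup>2 \<partial>M)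
       \<le> 18 * measure M (ep_event N \<eta> \<gamma> gF xbar tx \<inter> space M) * (real I)\<^sup>2 * \<eta> * \<gamma>
            * norm ((1 / real N) *\<^sub>R (\<Sum>j<N. g j xbar))
         + 18 * measure M (ep_event N \<eta> \<gamma> gF xbar tx \<inter> space M) * (real I)\<^sup>2 * \<eta>\<^sup>2
            * (\<gamma> * \<sigma> / \<eta> + 5 * \<sigma>\<^sup>2)"
proof -
  interpret P: prob_space M by (rule M)
  define Ev where "Ev = ep_event N \<eta> \<gamma> gF xbar tx"
  define G where "G = ep_G N gF xbar tx"
  define X where "X = (\<lambda>k \<omega>. ep_x N \<eta> \<gamma> gF xbar tx xs i k \<omega>)"
  define gbar where "gbar = (1 / real N) *\<^sub>R (\<Sum>j<N. g j xbar)"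
  define F where "F = norm gbar"
  define Ac where "Ac = 1 + exp C - (exp C - 1) / C"
  define Bc where "Bc = (exp C - 1) / C"
  define b1 where "b1 = 36 * (real I)\<^sup>2 * \<eta>\<^sup>2 * F\<^sup>2 + 126 * (real I)\<^sup>2 * \<eta>\<^sup>2 * \<sigma>\<^sup>2"
  define b2 where "b2 = 18 * (real I)\<^sup>2 * \<eta> * \<gamma> * F + 18 * (real I)\<^sup>2 * \<eta>\<^sup>2 * (\<gamma> * \<sigma> / \<eta> + 5 * \<sigma>\<^sup>2)"
  have N0: "0 < N" using N by simp
  have sig0: "\<sigma> \<ge> 0"
  proof -
    interpret D0: prob_space "D 0" using Dprob N0 by auto
    have "AE \<xi> in D 0. norm (gF 0 xbar \<xi> - g 0 xbar) \<le> \<sigma>" using noise N0 by auto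
    then have "AE \<xi> in D 0. 0 \<le> \<sigma>" by eventually_elim (use norm_ge_zero order_trans in blast)
    then show ?thesis by simp
  qed
  have gmeas: "g j \<in> borel_measurable borel" if "j < N" for j
    using hess[OF that] by (intro borel_measurable_continuous_onI continuous_at_imp_continuous_on ballI has_derivative_continuous) auto
  have ae0: "AE \<omega> in M. \<forall>j\<in>{..<N}. norm (gF j xbar (tx j \<omega>) - g j xbar) \<le> \<sigma>"
  proof (rule AE_finite_allI)
    fix j assume "j \<in> {..<N}"
    then have j: "j < N" by simp
    have "AE \<xi> in distr M (D j) (tx j). norm (gF j xbar \<xi> - g j xbar) \<le> \<sigma>"
      unfolding conjunct2[OF tx_dist[OF j]] by (rule noise[OF j])
    from AE_distrD[OF conjunct1[OF tx_dist[OF j]] this]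
    show "AE \<omega> in M. norm (gF j xbar (tx j \<omega>) - g j xbar) \<le> \<sigma>" .
  qed simp
  have aeS: "AE \<omega> in M. \<forall>s\<in>{..<I}. norm (gF i (X s \<omega>) (xs i s \<omega>) - g i (X s \<omega>)) \<le> \<sigma>"
  proof (rule AE_finite_allI)
    fix s assume "s \<in> {..<I}"
    then have s: "s < I" by simp
    show "AE \<omega> in M. norm (gF i (X s \<omega>) (xs i s \<omega>) - g i (X s \<omega>)) \<le> \<sigma>"
      unfolding X_def
      by (rule noise_AE[OF M Dprob gF_meas noise gmeas[OF i] tx_dist xs_dist indep i s])
  qed simp
  have Gm: "G \<in> borel_measurable M" unfolding G_def
    using tx_dist by (intro ep_G_meas[OF gF_meas]) auto
  have Evm: "Ev \<inter> space M \<in> sets M"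
  proof -
    have "{\<omega> \<in> space M. norm (G \<omega>) \<le> \<gamma> / \<eta>} \<in> sets M" using Gm by measurable
    moreover have "Ev \<inter> space M = {\<omega> \<in> space M. norm (G \<omega>) \<le> \<gamma> / \<eta>}"
      by (auto simp: Ev_def G_def ep_event_def)
    ultimately show ?thesis by simp
  qed
  have pw: "(norm (X k \<omega> - xbar))\<^sup>2 \<le> b1 \<and> (norm (X k \<omega> - xbar))\<^sup>2 \<le> b2"
    if a0: "\<forall>j\<in>{..<N}. norm (gF j xbar (tx j \<omega>) - g j xbar) \<le> \<sigma>"
      and aS: "\<forall>s\<in>{..<I}. norm (gF i (X s \<omega>) (xs i s \<omega>) - g i (X s \<omega>)) \<le> \<sigma>"
      and ev: "\<omega> \<in> Ev" for \<omega>
  proof -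
    define Gn where "Gn = norm (G \<omega>)"
    have "G \<omega> - gbar = (1 / real N) *\<^sub>R (\<Sum>j<N. gF j xbar (tx j \<omega>) - g j xbar)"
      by (simp add: G_def gbar_def ep_G_def ep_Gi_def sum_subtractf scaleR_diff_right)
    then have "norm (G \<omega> - gbar) \<le> (1 / real N) * (\<Sum>j<N. norm (gF j xbar (tx j \<omega>) - g j xbar))"
      using norm_sum[of "\<lambda>j. gF j xbar (tx j \<omega>) - g j xbar" "{..<N}"]
      by (simp add: divide_right_mono)
    also have "\<dots> \<le> (1 / real N) * (\<Sum>j<N. \<sigma>)"
      using a0 by (intro mult_left_mono sum_mono) auto
    also have "\<dots> = \<sigma>" using N0 by simp
    finally have dG: "norm (G \<omega> - gbar) \<le> \<sigma>" .
    have G1: "Gn \<le> F + \<sigma>" using dG norm_triangle_ineq2[of "G \<omega>" gbar] unfolding Gn_def F_def by linarith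
    have G1': "F \<le> Gn + \<sigma>" using dG norm_triangle_ineq3[of "G \<omega>" gbar] unfolding Gn_def F_def
      by (metis add.commute diff_le_eq norm_minus_commute norm_triangle_ineq2 order_trans)
    have G2: "Gn \<le> \<gamma> / \<eta>" using ev by (simp add: Ev_def ep_event_def Gn_def G_def)
    have Bc0: "Bc \<ge> 0" using C by (simp add: Bc_def)
    have AB: "Bc \<le> Ac" using AB_ge[OF C] by (simp add: Ac_def Bc_def)
    define K where "K = Ac * L0 + Bc * L1 * norm (g i xbar)"
    have K0: "K \<ge> 0" using Bc0 AB L0 L1 by (simp add: K_def)
    have hi: "norm (g i xbar) \<le> \<kappa> + \<rho> * (\<sigma> + \<gamma> / \<eta>)"
    proof -
      have "norm (g i xbar) \<le> \<kappa> + \<rho> * F" using hetero[OF i] by (simp add: F_def gbar_def)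
      also have "\<dots> \<le> \<kappa> + \<rho> * (\<sigma> + \<gamma> / \<eta>)" using G1' G2 rho by (intro add_left_mono mult_left_mono) auto
      finally show ?thesis .
    qed
    have "K \<le> Ac * L0 + Bc * L1 * \<kappa> + Bc * L1 * \<rho> * (\<sigma> + \<gamma> / \<eta>)"
    proof -
      have "Bc * L1 * norm (g i xbar) \<le> Bc * L1 * (\<kappa> + \<rho> * (\<sigma> + \<gamma> / \<eta>))"
        using hi Bc0 L1 by (intro mult_left_mono) auto
      then show ?thesis by (simp add: K_def algebra_simps)
    qed
    then have "2 * \<eta> * real I * K \<le> 2 * \<eta> * real I * (Ac * L0 + Bc * L1 * \<kappa> + Bc * L1 * \<rho> * (\<sigma> + \<gamma> / \<eta>))"
      using eta by (intro mult_left_mono) auto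
    also have "\<dots> \<le> 1" using step1 by (simp add: Ac_def Bc_def)
    finally have K1: "2 * \<eta> * real I * K \<le> 1" .
    have lip: "norm (g i z - g i xbar) \<le> K * norm (z - xbar)" if "L1 * norm (z - xbar) \<le> C" for z
      using lip_AB[OF hess[OF i] smooth[OF i] L1 L0 C that] by (simp add: K_def Ac_def Bc_def)
    have st2: "2 * \<eta> * real I * (2 * \<sigma> + \<gamma> / \<eta>) \<le> C / L1" using step2 by simp
    have pb: "norm (X k \<omega> - xbar) \<le> 2 * \<eta> * real k * (2 * \<sigma> + norm (G \<omega>))"
    proof -
      have n0: "norm (gF i xbar (tx i \<omega>) - g i xbar) \<le> \<sigma>" using a0 i by auto
      have nS: "norm (gF i (ep_x N \<eta> \<gamma> gF xbar tx xs i s \<omega>) (xs i s \<omega>) - g i (ep_x N \<eta> \<gamma> gF xbar tx xs i s \<omega>)) \<le> \<sigma>"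
        if "s < k" for s using aS that t(2) by (auto simp: X_def)
      show ?thesis unfolding X_def G_def
        by (rule path_bound[where g=g and i=i and gF=gF and K=K and C=C, OF ev[unfolded Ev_def] eta sig0 L1 n0 nS lip K1 K0 st2 t(2)])
    qed
    have "norm (X k \<omega> - xbar) \<le> 2 * \<eta> * real I * (2 * \<sigma> + Gn)"
    proof -
      have "2 * \<eta> * real k * (2 * \<sigma> + Gn) \<le> 2 * \<eta> * real I * (2 * \<sigma> + Gn)"
        using t(2) eta sig0 by (intro mult_right_mono mult_left_mono) (auto simp: Gn_def)
      then show ?thesis using pb by (simp add: Gn_def)
    qed
    then have sq: "(norm (X k \<omega> - xbar))\<^sup>2 \<le> (2 * \<eta> * real I * (2 * \<sigma> + Gn))\<^sup>2"
      by (intro power_mono) auto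
    have Gn0: "0 \<le> Gn" by (simp add: Gn_def)
    show ?thesis
      using sq arith_b[OF sig0 eta gam Gn0 G1 G2, of "real I"] unfolding b1_def b2_def by auto
  qed
  have b10: "b1 \<ge> 0" by (simp add: b1_def)
  have b20: "b2 \<ge> 0" using sig0 eta gam by (simp add: b2_def F_def)
  have intb: "(\<integral>\<omega>. indicator Ev \<omega> * (norm (X k \<omega> - xbar))\<^sup>2 \<partial>M) \<le> b * measure M (Ev \<inter> space M)"
    if b0: "b \<ge> 0" and bb: "\<And>\<omega>. \<forall>j\<in>{..<N}. norm (gF j xbar (tx j \<omega>) - g j xbar) \<le> \<sigma> \<Longrightarrow>
      \<forall>s\<in>{..<I}. norm (gF i (X s \<omega>) (xs i s \<omega>) - g i (X s \<omega>)) \<le> \<sigma> \<Longrightarrow> \<omega> \<in> Ev \<Longrightarrow>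
      (norm (X k \<omega> - xbar))\<^sup>2 \<le> b" for b
  proof -
    have ii: "integrable M (indicator (Ev \<inter> space M) :: 'm \<Rightarrow> real)"
      using Evm by (intro integrable_real_indicator) (auto simp: P.emeasure_eq_measure)
    have int: "integrable M (\<lambda>\<omega>. b * indicator (Ev \<inter> space M) \<omega>)" using ii by simp
    have "(\<integral>\<omega>. indicator Ev \<omega> * (norm (X k \<omega> - xbar))\<^sup>2 \<partial>M) \<le> (\<integral>\<omega>. b * indicator (Ev \<inter> space M) \<omega> \<partial>M)"
    proof (rule integral_mono_AE'[OF int])
      show "AE \<omega> in M. indicator Ev \<omega> * (norm (X k \<omega> - xbar))\<^sup>2 \<le> b * indicator (Ev \<inter> space M) \<omega>"
        using ae0 aeS AE_space by eventually_elim (auto simp: indicator_def bb)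
      show "AE \<omega> in M. 0 \<le> b * indicator (Ev \<inter> space M) \<omega>" using b0 by simp
    qed
    also have "\<dots> = b * measure M (Ev \<inter> space M)" by simp
    finally show ?thesis .
  qed
  have r1: "(\<integral>\<omega>. indicator Ev \<omega> * (norm (X k \<omega> - xbar))\<^sup>2 \<partial>M) \<le> b1 * measure M (Ev \<inter> space M)"
    by (rule intb[OF b10]) (use pw in blast)
  have r2: "(\<integral>\<omega>. indicator Ev \<omega> * (norm (X k \<omega> - xbar))\<^sup>2 \<partial>M) \<le> b2 * measure M (Ev \<inter> space M)"
    by (rule intb[OF b20]) (use pw in blast)
  have e1: "b1 * measure M (Ev \<inter> space M) = 36 * measure M (Ev \<inter> space M) * (real I)\<^sup>2 * \<eta>\<^sup>2 * F\<^sup>2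
         + 126 * measure M (Ev \<inter> space M) * (real I)\<^sup>2 * \<eta>\<^sup>2 * \<sigma>\<^sup>2"
    by (simp add: b1_def algebra_simps)
  have e2: "b2 * measure M (Ev \<inter> space M) = 18 * measure M (Ev \<inter> space M) * (real I)\<^sup>2 * \<eta> * \<gamma> * F
         + 18 * measure M (Ev \<inter> space M) * (real I)\<^sup>2 * \<eta>\<^sup>2 * (\<gamma> * \<sigma> / \<eta> + 5 * \<sigma>\<^sup>2)"
    by (simp add: b2_def algebra_simps)
  show ?thesis
    using r1 r2 unfolding e1 e2 unfolding Ev_def X_def F_def gbar_def by blast
qed

end
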